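(* Let $k>0$, $M>0$, $\beta\in\,]0,\tfrac12[$ and $P_0=\max\{10,(\frac{1+M}{4\pi})^{4/3},\frac{64(k+1)^2}{1-2\beta},\frac{256(k+1)^2M^4}{(1-2\beta)^2}\}$. Let $f\ge0$ be spherically symmetric with $f\in\tilde{\mathcal A}_{M,\beta}$, suppose $f(x,v)\le1$ for all $(x,v)$, and suppose there is $P\ge P_0$ such that $P^{1/4}\int_{\mathbb R^3}\int_{|v|\ge P}\sqrt{1+|v|^2}f\,dx\,dv\ge1$. Then there is a spherically symmetric function $\tilde f\ge0$ such that: $\rho_{\tilde f}=\rho_f$ (in particular $\tilde f\in\tilde{\mathcal A}_{M,\beta}$); $\mathcal D(\tilde f)\le\mathcal D(f)$; $\operatorname{supp}\tilde f\subset\{(x,v):|v|\le P+1\}$; $\tilde f(x,v)\le1$ for all $(x,v)$; and $$P^{1/4}\int_{\mathbb R^3}\int_{P\le|v|\le P+1}\sqrt{1+|v|^2}\,\tilde f\,dx\,dv\le1.$$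
   Context: Let $\chi(s)=\frac{k}{k+1}s^{1+1/k}$. A measurable $f\ge0$ on $\mathbb R^3\times\mathbb R^3$ is spherically symmetric if $f(Ax,Av)=f(x,v)$ for all $A\in SO(3)$. For such $f$: $\rho_f(x)=\int\sqrt{1+|v|^2}f(x,v)\,dv$ (radial, written $\rho_f(r)$), $m_f(r)=\int_{|x|\le r}\int\sqrt{1+|v|^2}f\,dx\,dv$, $\lambda_f$ given by $e^{-2\lambda_f(r)}=1-2m_f(r)/r$, and $\mathcal D(f)=\int\int e^{\lambda_f(|x|)}(\chi(f)-f)\,dx\,dv$. $\tilde{\mathcal A}_{M,\beta}$ is the set of measurable spherically symmetric $f\ge0$ with $\int\int\sqrt{1+|v|^2}f\,dx\,dv=M$, $m_f(r)/r\le\beta$ for $r\in\,]0,\infty[$, and $\rho_f(r)\le1$ for $r\in[0,\infty[$. *)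

theory Defs
  imports "HOL-Analysis.Analysis"
begin

type_synonym phase = "(real^3) \<times> (real^3)"

definition chi :: "real \<Rightarrow> real \<Rightarrow> real" where
  "chi k s = k / (k + 1) * s powr (1 + 1 / k)"

definition rot3 :: "(real^3^3) set" where
  "rot3 = {A. orthogonal_matrix A \<and> det A = 1}"

definition spher_sym :: "(phase \<Rightarrow> real) \<Rightarrow> bool" where
  "spher_sym f \<longleftrightarrow> (\<forall>A\<in>rot3. \<forall>x v. f (A *v x, A *v v) = f (x, v))"

definition rho :: "(phase \<Rightarrow> real) \<Rightarrow> real^3 \<Rightarrow> ennreal" where
  "rho f x = (\<integral>\<^sup>+ v. ennreal (sqrt (1 + (norm v)\<^sup>2) * f (x, v)) \<partial>lebesgue)"

definition mass_r :: "(phase \<Rightarrow> real) \<Rightarrow> real \<Rightarrow> ennreal" where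
  "mass_r f r = (\<integral>\<^sup>+ z. ennreal (indicator {z. norm (fst z) \<le> r} z
                  * sqrt (1 + (norm (snd z))\<^sup>2) * f z) \<partial>lebesgue)"

definition total_mass :: "(phase \<Rightarrow> real) \<Rightarrow> ennreal" where
  "total_mass f = (\<integral>\<^sup>+ z. ennreal (sqrt (1 + (norm (snd z))\<^sup>2) * f z) \<partial>lebesgue)"

(* e^{lambda_f(r)}, where e^{-2 lambda_f(r)} = 1 - 2 m_f(r)/r  (value at r = 0 irrelevant, set to 1) *)
definition exp_lambda :: "(phase \<Rightarrow> real) \<Rightarrow> real \<Rightarrow> real" where
  "exp_lambda f r = (if r > 0 then 1 / sqrt (1 - 2 * enn2real (mass_r f r) / r) else 1)"

definition Dfun :: "real \<Rightarrow> (phase \<Rightarrow> real) \<Rightarrow> real" where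
  "Dfun k f = (\<integral> z. exp_lambda f (norm (fst z)) * (chi k (f z) - f z) \<partial>lebesgue)"

definition A_tilde :: "real \<Rightarrow> real \<Rightarrow> (phase \<Rightarrow> real) set" where
  "A_tilde M \<beta> = {f. f \<in> borel_measurable lebesgue \<and> spher_sym f \<and> (\<forall>z. f z \<ge> 0)
      \<and> total_mass f = ennreal M
      \<and> (\<forall>r>0. mass_r f r \<le> ennreal (\<beta> * r))
      \<and> (\<forall>x. rho f x \<le> 1)}"

definition P0 :: "real \<Rightarrow> real \<Rightarrow> real \<Rightarrow> real" where
  "P0 k M \<beta> = Max {10, ((1 + M) / (4 * pi)) powr (4/3), 64 * (k+1)\<^sup>2 / (1 - 2*\<beta>),
                     256 * (k+1)\<^sup>2 * M ^ 4 / (1 - 2*\<beta>)\<^sup>2}"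

end

theory Submission
  imports Defs
begin

lemma meas_AE_completion:
  fixes g g' :: "'a \<Rightarrow> 'b::{second_countable_topology, topological_space}"
  assumes g': "g' \<in> borel_measurable M" and ae: "AE x in M. g x = g' x"
  shows "g \<in> borel_measurable (completion M)"
proof (rule measurableI)
  fix x assume "x \<in> space (completion M)" thus "g x \<in> space borel" by simp
next
  fix A :: "'b set" assume A: "A \<in> sets borel"
  have s: "g' -` A \<inter> space M \<in> sets (completion M)"
    using g' A by (simp add: measurable_sets)
  have "AE x in completion M. x \<in> g' -` A \<inter> space M \<longleftrightarrow> x \<in> g -` A \<inter> space (completion M)"
    by (rule AE_completion) (use ae in \<open>eventually_elim, auto\<close>)
  then show "g -` A \<inter> space (completion M) \<in> sets (completion M)"
    by (rule completion.in_sets_AE[OF _ s]) auto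
qed

lemma AE_fst_lborel:
  assumes "AE x in (lborel::(real^3) measure). P x"
  shows "AE z in (lborel::phase measure). P (fst z)"
proof -
  obtain N where N: "N \<in> null_sets lborel" "{x \<in> space lborel. \<not> P x} \<subseteq> N"
    using assms by (auto simp: eventually_ae_filter)
  have "N \<times> (UNIV::(real^3) set) \<in> null_sets ((lborel::(real^3) measure) \<Otimes>\<^sub>M (lborel::(real^3) measure))"
    using N by (intro lborel.times_in_null_sets1) auto
  hence "N \<times> (UNIV::(real^3) set) \<in> null_sets (lborel::phase measure)"
    by (simp add: lborel_prod)
  then show ?thesis
    by (rule AE_I') (use N in auto)
qed

lemma tonelli_leb:
  fixes h :: "phase \<Rightarrow> ennreal"
  assumes h: "h \<in> borel_measurable lebesgue"
  shows "(\<integral>\<^sup>+z. h z \<partial>lebesgue) = (\<integral>\<^sup>+x. (\<integral>\<^sup>+v. h (x,v) \<partial>lebesgue) \<partial>lebesgue)"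
    and "AE x in lborel. (\<lambda>v. h (x,v)) \<in> borel_measurable lebesgue"
    and "\<exists>\<phi> \<in> borel_measurable lborel. AE x in lborel. (\<integral>\<^sup>+v. h (x,v) \<partial>lebesgue) = \<phi> x"
proof -
  obtain h' where h': "h' \<in> borel_measurable (lborel::phase measure)" and ae: "AE z in lborel. h z = h' z"
    using completion_ex_borel_measurable[OF h] by blast
  let ?M2 = "(lborel::(real^3) measure) \<Otimes>\<^sub>M (lborel::(real^3) measure)"
  have h'2: "h' \<in> borel_measurable ?M2" using h' by (simp add: lborel_prod)
  have ae2: "AE z in ?M2. h z = h' z" unfolding lborel_prod by (rule ae)
  have aex: "AE x in lborel. AE v in lborel. h (x,v) = h' (x,v)"
    using lborel_pair.AE_pair[OF ae2] by simp
  define \<phi> where "\<phi> x = (\<integral>\<^sup>+v. h' (x,v) \<partial>lborel)" for x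
  have \<phi>m: "\<phi> \<in> borel_measurable lborel"
    unfolding \<phi>_def using lborel.borel_measurable_nn_integral_fst[OF h'2] by simp
  have inner: "AE x in lborel. (\<integral>\<^sup>+v. h (x,v) \<partial>lebesgue) = \<phi> x"
    using aex
  proof eventually_elim
    case (elim x)
    have "(\<integral>\<^sup>+v. h (x,v) \<partial>lebesgue) = (\<integral>\<^sup>+v. h' (x,v) \<partial>lebesgue)"
      by (rule nn_integral_cong_AE) (rule AE_completion[OF elim])
    also have "\<dots> = \<phi> x" unfolding \<phi>_def by (rule nn_integral_completion)
    finally show ?case .
  qed
  then show "\<exists>\<phi> \<in> borel_measurable lborel. AE x in lborel. (\<integral>\<^sup>+v. h (x,v) \<partial>lebesgue) = \<phi> x"
    using \<phi>m by blast
  show "AE x in lborel. (\<lambda>v. h (x,v)) \<in> borel_measurable lebesgue"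
    using aex
  proof eventually_elim
    case (elim x)
    have "(\<lambda>v. h' (x,v)) \<in> borel_measurable lborel"
      using h'2 by measurable
    then show ?case by (rule meas_AE_completion) (use elim in simp)
  qed
  have "(\<integral>\<^sup>+z. h z \<partial>lebesgue) = (\<integral>\<^sup>+z. h' z \<partial>lebesgue)"
    by (rule nn_integral_cong_AE) (rule AE_completion[OF ae])
  also have "\<dots> = (\<integral>\<^sup>+z. h' z \<partial>?M2)" by (simp add: nn_integral_completion lborel_prod)
  also have "\<dots> = (\<integral>\<^sup>+x. \<phi> x \<partial>lborel)"
    unfolding \<phi>_def using lborel.nn_integral_fst[OF h'2] by simp
  also have "\<dots> = (\<integral>\<^sup>+x. \<phi> x \<partial>lebesgue)" by (simp add: nn_integral_completion)
  also have "\<dots> = (\<integral>\<^sup>+x. (\<integral>\<^sup>+v. h (x,v) \<partial>lebesgue) \<partial>lebesgue)"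
    by (rule nn_integral_cong_AE) (rule AE_completion, use inner in \<open>eventually_elim, simp\<close>)
  finally show "(\<integral>\<^sup>+z. h z \<partial>lebesgue) = (\<integral>\<^sup>+x. (\<integral>\<^sup>+v. h (x,v) \<partial>lebesgue) \<partial>lebesgue)" .
qed

lemma nn_integral_comp_le:
  assumes sp: "space M = UNIV" and S: "S \<in> M \<rightarrow>\<^sub>M M"
    and pres: "\<And>B. B \<in> sets M \<Longrightarrow> emeasure M (S -` B) = emeasure M B"
    and inv: "\<And>y. T (S y) = y"
  shows "(\<integral>\<^sup>+y. H (T y) \<partial>M) \<le> (\<integral>\<^sup>+y. H y \<partial>M)"
  unfolding nn_integral_def
proof (rule SUP_least)
  fix s assume "s \<in> {g. simple_function M g \<and> g \<le> (\<lambda>y. H (T y))}"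
  then have s: "simple_function M s" and sle: "\<And>y. s y \<le> H (T y)" by (auto simp: le_fun_def)
  have s2: "simple_function M (\<lambda>y. s (S y))" by (rule simple_function_comp[OF S s])
  have le2: "(\<lambda>y. s (S y)) \<le> H" using sle inv by (auto simp: le_fun_def) (metis)
  have fin: "finite (s ` UNIV)" using s sp by (simp add: simple_function_def)
  have sets: "\<And>y. s -` {y} \<in> sets M" using s sp by (metis inf_top.right_neutral simple_functionD(2))
  have "integral\<^sup>S M s = integral\<^sup>S M (\<lambda>y. s (S y))"
  proof -
    have "integral\<^sup>S M (\<lambda>y. s (S y)) = (\<Sum>y\<in>(\<lambda>y. s (S y)) ` UNIV. y * emeasure M (S -` (s -` {y})))"
      unfolding simple_integral_def sp by (simp add: vimage_def)
    also have "\<dots> = (\<Sum>y\<in>(\<lambda>y. s (S y)) ` UNIV. y * emeasure M (s -` {y}))"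
      using pres[OF sets] by simp
    also have "\<dots> = (\<Sum>y\<in>s ` UNIV. y * emeasure M (s -` {y}))"
    proof (rule sum.mono_neutral_left[OF fin])
      show "range (\<lambda>y. s (S y)) \<subseteq> range s" by auto
      show "\<forall>i\<in>range s - range (\<lambda>y. s (S y)). i * emeasure M (s -` {i}) = 0"
      proof
        fix i assume "i \<in> range s - range (\<lambda>y. s (S y))"
        then have "\<forall>y. s (S y) \<noteq> i" by blast
        then have "S -` (s -` {i}) = {}" by auto
        then have "emeasure M (s -` {i}) = 0" using pres[OF sets, of i] by simp
        then show "i * emeasure M (s -` {i}) = 0" by simp
      qed
    qed
    also have "\<dots> = integral\<^sup>S M s" unfolding simple_integral_def sp by simp
    finally show ?thesis by simp
  qed
  also have "\<dots> \<le> (SUP g \<in> {g. simple_function M g \<and> g \<le> H}. integral\<^sup>S M g)"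
    by (rule SUP_upper) (use s2 le2 in auto)
  finally show "integral\<^sup>S M s \<le> (SUP g \<in> {g. simple_function M g \<and> g \<le> H}. integral\<^sup>S M g)" .
qed

lemma orth_lebesgue_sets:
  fixes U :: "real^3^3"
  assumes "orthogonal_matrix U" "B \<in> sets lebesgue"
  shows "(\<lambda>v. U *v v) ` B \<in> sets lebesgue"
proof -
  have "(\<lambda>v. U *v v) differentiable_on B"
    by (simp add: differentiable_on_def linear_imp_differentiable)
  then show ?thesis by (rule differentiable_image_in_sets_lebesgue[OF assms(2) order_refl])
qed

lemma orth_trans: 
  fixes U :: "real^3^3"
  assumes "orthogonal_matrix U"
  shows "orthogonal_transformation (\<lambda>v. U *v v)"
  using assms by (simp add: orthogonal_transformation_matrix)

lemma orth_lebesgue_emeasure: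
  fixes U :: "real^3^3"
  assumes U: "orthogonal_matrix U" and B: "B \<in> sets lebesgue"
  shows "emeasure lebesgue ((\<lambda>v. U *v v) ` B) = emeasure lebesgue B"
proof -
  define Bn where "Bn n = B \<inter> cball 0 (real n)" for n
  have Bn: "Bn n \<in> lmeasurable" for n
    unfolding Bn_def by (rule bounded_set_imp_lmeasurable) (use B in auto)
  have img: "(\<lambda>v. U *v v) ` Bn n \<in> lmeasurable" "measure lebesgue ((\<lambda>v. U *v v) ` Bn n) = measure lebesgue (Bn n)" for n
    using measurable_orthogonal_image[OF orth_trans[OF U] Bn] measure_orthogonal_image[OF orth_trans[OF U] Bn] by auto
  have UB: "B = (\<Union>n. Bn n)"
  proof
    show "B \<subseteq> (\<Union>n. Bn n)"
    proof
      fix x assume "x \<in> B"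
      obtain n where "norm x \<le> real n" using real_arch_simple by blast
      then show "x \<in> (\<Union>n. Bn n)" using \<open>x \<in> B\<close> unfolding Bn_def by auto
    qed
  qed (auto simp: Bn_def)
  have inc: "incseq Bn" unfolding Bn_def incseq_def by auto
  have inc2: "incseq (\<lambda>n. (\<lambda>v. U *v v) ` Bn n)" using inc unfolding incseq_def by auto
  have "emeasure lebesgue ((\<lambda>v. U *v v) ` B) = emeasure lebesgue (\<Union>n. (\<lambda>v. U *v v) ` Bn n)"
    by (subst UB) (simp add: image_UN)
  also have "\<dots> = (SUP n. emeasure lebesgue ((\<lambda>v. U *v v) ` Bn n))"
    by (rule SUP_emeasure_incseq[symmetric]) (use img inc2 in auto)
  also have "\<dots> = (SUP n. emeasure lebesgue (Bn n))"
    using img Bn by (simp add: emeasure_eq_measure2)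
  also have "\<dots> = emeasure lebesgue (\<Union>n. Bn n)"
    by (rule SUP_emeasure_incseq) (use Bn inc in auto)
  also have "\<dots> = emeasure lebesgue B" using UB by simp
  finally show ?thesis .
qed

lemma nn_integral_orth:
  fixes U :: "real^3^3"
  assumes U: "orthogonal_matrix U"
  shows "(\<integral>\<^sup>+v. H (U *v v) \<partial>lebesgue) = (\<integral>\<^sup>+v. H v \<partial>lebesgue)"
proof -
  have key: "(\<integral>\<^sup>+v. K (V *v v) \<partial>lebesgue) \<le> (\<integral>\<^sup>+v. K v \<partial>lebesgue)"
    if V: "orthogonal_matrix (V::real^3^3)" for V K
  proof (rule nn_integral_comp_le[where S="\<lambda>v. transpose V *v v"])
    show "space lebesgue = UNIV" by simp
    have VT: "orthogonal_matrix (transpose V)" using V by simp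
    have pre: "(\<lambda>v. transpose V *v v) -` B = (\<lambda>v. V *v v) ` B" for B
    proof -
      have 1: "V *v (transpose V *v x) = x" "transpose V *v (V *v x) = x" for x
        using V unfolding orthogonal_matrix_def by (simp_all only: matrix_vector_mul_assoc matrix_vector_mul_lid)
      show ?thesis
      proof
        show "(\<lambda>v. transpose V *v v) -` B \<subseteq> (\<lambda>v. V *v v) ` B"
        proof
          fix x assume "x \<in> (\<lambda>v. transpose V *v v) -` B"
          then have "transpose V *v x \<in> B" by simp
          then show "x \<in> (\<lambda>v. V *v v) ` B" using 1(1)[of x] by (metis image_eqI)
        qed
        show "(\<lambda>v. V *v v) ` B \<subseteq> (\<lambda>v. transpose V *v v) -` B"
          using 1(2) by auto
      qed
    qed
    show "(\<lambda>v. transpose V *v v) \<in> lebesgue \<rightarrow>\<^sub>M lebesgue"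
    proof (rule measurableI)
      fix A :: "(real^3) set" assume "A \<in> sets lebesgue"
      then have "(\<lambda>v. V *v v) ` A \<in> sets lebesgue" by (rule orth_lebesgue_sets[OF V])
      then show "(\<lambda>v. transpose V *v v) -` A \<inter> space lebesgue \<in> sets lebesgue"
        by (simp only: pre) simp
    qed simp
    show "emeasure lebesgue ((\<lambda>v. transpose V *v v) -` B) = emeasure lebesgue B" if "B \<in> sets lebesgue" for B
      using orth_lebesgue_emeasure[OF V that] by (simp only: pre)
    show "V *v (transpose V *v y) = y" for y
      using V unfolding orthogonal_matrix_def by (simp only: matrix_vector_mul_assoc matrix_vector_mul_lid)
  qed
  have "(\<integral>\<^sup>+v. H v \<partial>lebesgue) = (\<integral>\<^sup>+v. H (U *v (transpose U *v v)) \<partial>lebesgue)"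
    using U unfolding orthogonal_matrix_def by (simp only: matrix_vector_mul_assoc matrix_vector_mul_lid)
  also have "\<dots> \<le> (\<integral>\<^sup>+v. H (U *v v) \<partial>lebesgue)"
    using key[of "transpose U" "\<lambda>v. H (U *v v)"] U by simp
  finally show ?thesis using key[OF U, of H] by simp
qed

definition wv :: "real^3 \<Rightarrow> real" where "wv v = sqrt (1 + (norm v)\<^sup>2)"
definition Gk :: "real \<Rightarrow> real \<Rightarrow> real" where "Gk k u = (max 0 (1 - u)) powr k"
definition hF :: "real \<Rightarrow> real \<Rightarrow> real^3 \<Rightarrow> real" where "hF k \<mu> v = wv v * Gk k (\<mu> * wv v)"
definition Fr :: "real \<Rightarrow> real \<Rightarrow> real" where "Fr k \<mu> = integral\<^sup>L lborel (hF k \<mu>)"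

lemma wv_ge1: "wv v \<ge> 1" unfolding wv_def by simp
lemma wv_pos: "wv v > 0" using wv_ge1[of v] by simp
lemma norm_le_wv: "norm v \<le> wv v" unfolding wv_def by (simp add: real_le_rsqrt)
lemma wv_cont: "continuous_on UNIV wv" unfolding wv_def by (intro continuous_intros)
lemma wv_meas[measurable]: "wv \<in> borel_measurable borel"
  using wv_cont by (rule borel_measurable_continuous_onI)

lemma Gk_nonneg: "Gk k u \<ge> 0" unfolding Gk_def by simp
lemma Gk_le1: "k \<ge> 0 \<Longrightarrow> u \<ge> 0 \<Longrightarrow> Gk k u \<le> 1" unfolding Gk_def by (intro powr_le1) auto
lemma Gk_zero: "u \<ge> 1 \<Longrightarrow> Gk k u = 0" unfolding Gk_def by simp
lemma Gk_pos_eq: "u < 1 \<Longrightarrow> Gk k u = (1 - u) powr k" unfolding Gk_def by simp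
lemma Gk_cont: "k > 0 \<Longrightarrow> continuous_on UNIV (Gk k)"
  unfolding Gk_def by (rule continuous_on_powr') (auto intro!: continuous_intros)
lemma Gk_meas[measurable]: "k > 0 \<Longrightarrow> Gk k \<in> borel_measurable borel"
  using Gk_cont by (rule borel_measurable_continuous_onI)

lemma Gk_lower:
  assumes k: "k > 0" and u: "0 \<le> u" "u \<le> 1 / (2 * (k + 1))"
  shows "Gk k u \<ge> 1/3"
proof -
  have "1 / (2 * (k + 1)) \<le> 1/2" using k by (simp add: field_simps)
  then have u1: "u \<le> 1/2" using u by linarith
  then have "u < 1" by simp
  have "ln (1 - u) \<ge> - u - 2 * u\<^sup>2" using ln_one_minus_pos_lower_bound[OF u(1) u1] .
  moreover have "2 * u\<^sup>2 \<le> u" using u u1 mult_left_mono[of "2*u" 1 u] by (simp add: power2_eq_square)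
  ultimately have l: "ln (1 - u) \<ge> - 2 * u" by simp
  have h: "2 * u * (k + 1) \<le> 1" using u k by (simp add: field_simps)
  have "2 * u * k \<le> k / (k + 1)" using mult_left_mono[OF h, of k] k by (simp add: field_simps)
  also have "\<dots> \<le> 1" using k by simp
  finally have kk: "2 * u * k \<le> 1" .
  have "k * ln (1 - u) \<ge> k * (- 2 * u)" using mult_left_mono[OF l, of k] k by simp
  then have "k * ln (1 - u) \<ge> -1" using kk by (simp add: algebra_simps)
  then have "exp (k * ln (1 - u)) \<ge> exp (-1)" by simp
  moreover have "exp (-1::real) \<ge> 1/3" using exp_le by (simp add: exp_minus field_simps)
  ultimately have "exp (k * ln (1 - u)) \<ge> 1/3" by linarith
  then show ?thesis using \<open>u < 1\<close> by (simp add: Gk_pos_eq powr_def)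
qed

lemma hF_nonneg: "hF k \<mu> v \<ge> 0" unfolding hF_def using wv_pos[of v] Gk_nonneg by simp

lemma hF_meas[measurable]: "k > 0 \<Longrightarrow> hF k \<mu> \<in> borel_measurable borel"
  unfolding hF_def by measurable

lemma hF_bound:
  assumes k: "k > 0" and m0: "0 < \<mu>0" "\<mu>0 \<le> \<mu>"
  shows "hF k \<mu> v \<le> (1/\<mu>0) * indicator (cball 0 (1/\<mu>0)) v"
proof (cases "\<mu> * wv v < 1")
  case True
  have "\<mu>0 * wv v \<le> \<mu> * wv v" using m0 wv_pos[of v] by (simp add: mult_right_mono)
  then have "\<mu>0 * wv v < 1" using True by simp
  then have w: "wv v < 1/\<mu>0" using m0 by (simp add: field_simps mult.commute)
  then have "norm v \<le> 1/\<mu>0" using norm_le_wv[of v] by simp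
  then have "indicator (cball 0 (1/\<mu>0)) v = (1::real)" by (simp add: indicator_def)
  moreover have "hF k \<mu> v \<le> wv v" unfolding hF_def
    using Gk_le1[of k "\<mu> * wv v"] k m0 wv_pos[of v] by (simp add: mult_left_le)
  ultimately show ?thesis using w by simp
next
  case False
  then show ?thesis unfolding hF_def using Gk_zero[of "\<mu> * wv v" k] m0 by (simp add: indicator_def)
qed

lemma cball_int: "integrable lborel (\<lambda>v::real^3. (c::real) * indicator (cball 0 r) v)"
proof (cases "r \<ge> 0")
  case True then show ?thesis
    using emeasure_cball[where c="0::real^3" and r=r] by (simp add: integrable_indicator_iff)
next
  case False then have "cball (0::real^3) r = {}" by simp
  then show ?thesis by simp
qed

lemma hF_int:
  assumes k: "k > 0" and m0: "0 < \<mu>0" "\<mu>0 \<le> \<mu>"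
  shows "integrable lborel (hF k \<mu>)"
proof (rule Bochner_Integration.integrable_bound[OF cball_int[of "1/\<mu>0" "1/\<mu>0"]])
  show "hF k \<mu> \<in> borel_measurable lborel" using k by simp
  have "norm (hF k \<mu> v) \<le> norm ((1/\<mu>0) * indicator (cball 0 (1/\<mu>0)) v)" for v
  proof -
    have "0 \<le> (1/\<mu>0) * indicator (cball 0 (1/\<mu>0)) v" using m0 by simp
    then show ?thesis using hF_bound[OF assms, of v]
      by (simp only: real_norm_def abs_of_nonneg[OF hF_nonneg] abs_of_nonneg)
  qed
  then show "AE v in lborel. norm (hF k \<mu> v) \<le> norm ((1/\<mu>0) * indicator (cball 0 (1/\<mu>0)) v)"
    by simp
qed

lemma Fr_cont:
  assumes k: "k > 0" and m0: "0 < \<mu>0"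
  shows "continuous_on {\<mu>0..1} (Fr k)"
proof (rule continuous_on_sequentiallyI)
  fix u a assume u: "\<forall>n. u n \<in> {\<mu>0..1}" and a: "a \<in> {\<mu>0..1}" and lim: "u \<longlonglongrightarrow> a"
  show "(\<lambda>n. Fr k (u n)) \<longlonglongrightarrow> Fr k a"
    unfolding Fr_def
  proof (rule integral_dominated_convergence[where w="\<lambda>v. (1/\<mu>0) * indicator (cball 0 (1/\<mu>0)) v"])
    show "hF k a \<in> borel_measurable lborel" using k by simp
    show "\<And>i. hF k (u i) \<in> borel_measurable lborel" using k by simp
    show "integrable lborel (\<lambda>v::real^3. (1/\<mu>0) * indicator (cball 0 (1/\<mu>0)) v)" by (rule cball_int)
    show "AE v in lborel. (\<lambda>i. hF k (u i) v) \<longlonglongrightarrow> hF k a v"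
    proof (rule AE_I2)
      fix v
      have "(\<lambda>i. u i * wv v) \<longlonglongrightarrow> a * wv v" by (intro tendsto_intros lim)
      moreover have "isCont (Gk k) (a * wv v)" using Gk_cont[OF k] by (simp add: continuous_on_eq_continuous_at)
      ultimately have "(\<lambda>i. Gk k (u i * wv v)) \<longlonglongrightarrow> Gk k (a * wv v)"
        using isCont_tendsto_compose by blast
      then show "(\<lambda>i. hF k (u i) v) \<longlonglongrightarrow> hF k a v" unfolding hF_def by (intro tendsto_intros)
    qed
    show "\<And>i. AE v in lborel. norm (hF k (u i) v) \<le> (1/\<mu>0) * indicator (cball 0 (1/\<mu>0)) v"
      using hF_bound[OF k m0] hF_nonneg u by auto
  qed
qed

lemma Fr_one: "Fr k 1 = 0"
proof -
  have "hF k 1 = (\<lambda>v. 0)" unfolding hF_def using wv_ge1 Gk_zero by (auto simp: fun_eq_iff)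
  then show ?thesis unfolding Fr_def by simp
qed

lemma Fr_ge1:
  assumes k: "k > 0" and m0: "0 < \<mu>0" "\<mu>0 \<le> 1 / (4 * (k + 1))"
  shows "Fr k \<mu>0 \<ge> 1"
proof -
  have b: "hF k \<mu>0 v \<ge> (1/3) * indicator (cball 0 1) v" for v
  proof (cases "norm v \<le> 1")
    case True
    have "(norm v)\<^sup>2 \<le> 1" using True by (simp add: power_le_one)
    then have "sqrt (1 + (norm v)\<^sup>2) \<le> sqrt 4" by (intro real_sqrt_le_mono) simp
    then have "wv v \<le> 2" unfolding wv_def by simp
    then have "\<mu>0 * wv v \<le> \<mu>0 * 2" using m0 by simp
    also have "\<dots> \<le> 1 / (2 * (k + 1))" using m0 k by (simp add: field_simps)
    finally have "Gk k (\<mu>0 * wv v) \<ge> 1/3" using Gk_lower[OF k] m0 wv_pos[of v] by simp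
    then have "hF k \<mu>0 v \<ge> 1/3" unfolding hF_def using wv_ge1[of v] mult_mono[of 1 "wv v" "1/3" "Gk k (\<mu>0 * wv v)"]
      by simp
    then show ?thesis using True by (simp add: indicator_def)
  next
    case False then show ?thesis using hF_nonneg by (simp add: indicator_def)
  qed
  have "Fr k \<mu>0 \<ge> integral\<^sup>L lborel (\<lambda>v::real^3. (1/3) * indicator (cball 0 1) v)"
    unfolding Fr_def by (rule integral_mono[OF cball_int hF_int[OF k m0(1) order_refl]]) (use b in auto)
  also have "integral\<^sup>L lborel (\<lambda>v::real^3. (1/3) * indicator (cball 0 1) v) = (1/3) * (4/3 * pi)"
    by (simp add: emeasure_cball unit_ball_vol_3 measure_def)
  finally show ?thesis using pi_gt3 by simp
qed

lemma Fr_nn: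
  assumes k: "k > 0" and m0: "0 < \<mu>0" "\<mu>0 \<le> \<mu>"
  shows "(\<integral>\<^sup>+v. ennreal (hF k \<mu> v) \<partial>lebesgue) = ennreal (Fr k \<mu>)"
  unfolding Fr_def nn_integral_completion
  by (rule nn_integral_eq_integral[OF hF_int[OF assms]]) (simp add: hF_nonneg)

definition Mu :: "real \<Rightarrow> real \<Rightarrow> real \<Rightarrow> real" where
  "Mu k \<mu>0 t = Inf {\<mu> \<in> {\<mu>0..1}. Fr k \<mu> \<le> max 0 (min 1 t)}"

locale mu_setup =
  fixes k \<mu>0 :: real
  assumes k: "k > 0" and m0: "0 < \<mu>0" "\<mu>0 \<le> 1 / (4 * (k + 1))"
begin

lemma m0_le1: "\<mu>0 \<le> 1"
proof -
  have "1 / (4 * (k + 1)) \<le> 1" using k by (simp add: field_simps)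
  then show ?thesis using m0 by linarith
qed

definition "SS t = {\<mu> \<in> {\<mu>0..1}. Fr k \<mu> \<le> max 0 (min 1 t)}"

lemma SS_ne: "1 \<in> SS t" unfolding SS_def using m0_le1 Fr_one by auto
lemma SS_bdd: "bdd_below (SS t)" unfolding SS_def by (rule bdd_belowI[of _ \<mu>0]) auto
lemma SS_closed: "closed (SS t)"
proof -
  have "SS t = {\<mu>0..1} \<inter> Fr k -` {..max 0 (min 1 t)}" unfolding SS_def by auto
  then show ?thesis using continuous_closed_preimage[OF Fr_cont[OF k m0(1)]] by simp
qed

lemma Mu_in: "Mu k \<mu>0 t \<in> SS t"
  unfolding Mu_def SS_def[symmetric] using closed_contains_Inf[OF _ SS_bdd SS_closed] SS_ne by blast

lemma Mu_range: "\<mu>0 \<le> Mu k \<mu>0 t" "Mu k \<mu>0 t \<le> 1"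
  using Mu_in unfolding SS_def by auto

lemma Mu_Fr: assumes "0 \<le> t" "t \<le> 1" shows "Fr k (Mu k \<mu>0 t) = t"
proof -
  let ?m = "Mu k \<mu>0 t"
  have tau: "max 0 (min 1 t) = t" using assms by simp
  have "Fr k ?m \<le> max 0 (min 1 t)" using Mu_in[of t] by (simp add: SS_def)
  then have le: "Fr k ?m \<le> t" using tau by simp
  have "1 \<le> Fr k \<mu>0" by (rule Fr_ge1[OF k m0])
  then have ge: "t \<le> Fr k \<mu>0" using assms by simp
  have cont: "continuous_on {\<mu>0..?m} (Fr k)"
    by (rule continuous_on_subset[OF Fr_cont[OF k m0(1)]]) (use Mu_range in auto)
  obtain x where x: "\<mu>0 \<le> x" "x \<le> ?m" "Fr k x = t"
    using IVT2'[of "Fr k" ?m t \<mu>0, OF le ge Mu_range(1) cont] by blast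
  have "x \<le> 1" using x(2) Mu_range(2)[of t] by linarith
  then have "x \<in> SS t" unfolding SS_def using x tau by auto
  then have "?m \<le> x" unfolding Mu_def SS_def[symmetric] by (rule cInf_lower[OF _ SS_bdd])
  then show ?thesis using x by simp
qed

lemma Mu_antimono: assumes "t1 \<le> t2" shows "Mu k \<mu>0 t2 \<le> Mu k \<mu>0 t1"
  unfolding Mu_def SS_def[symmetric]
proof (rule cInf_superset_mono)
  show "SS t1 \<noteq> {}" using SS_ne by auto
  show "bdd_below (SS t2)" by (rule SS_bdd)
  show "SS t1 \<subseteq> SS t2" unfolding SS_def using assms by auto
qed

lemma Mu_meas[measurable]: "Mu k \<mu>0 \<in> borel_measurable borel"
proof -
  have "mono (\<lambda>t. - Mu k \<mu>0 t)" unfolding mono_def using Mu_antimono by simp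
  then have "(\<lambda>t. - Mu k \<mu>0 t) \<in> borel_measurable borel" by (rule borel_measurable_mono)
  then have "(\<lambda>t. - (- Mu k \<mu>0 t)) \<in> borel_measurable borel" by measurable
  then show ?thesis by simp
qed

end

lemma chi_zero: "chi k 0 = 0" unfolding chi_def by simp

lemma chi_nonneg: "k > 0 \<Longrightarrow> chi k s \<ge> 0" unfolding chi_def by simp

lemma chi_le: assumes "k > 0" "0 \<le> s" "s \<le> 1" shows "chi k s \<le> s"
proof (cases "s = 0")
  case True then show ?thesis by (simp add: chi_def)
next
  case False
  then have "s powr (1 + 1/k) \<le> s" using assms by (intro powr_le_one_le) auto
  moreover have "k / (k + 1) \<le> 1" using assms by simp
  moreover have "0 \<le> s powr (1 + 1/k)" by simp
  ultimately have "k / (k + 1) * s powr (1 + 1/k) \<le> 1 * s" by (intro mult_mono) (use assms in auto)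
  then show ?thesis unfolding chi_def by simp
qed

lemma chi_meas[measurable]: "chi k \<in> borel_measurable borel"
  unfolding chi_def by measurable

lemma phi_ineq:
  assumes k: "k > 0" and s: "s \<ge> 0" and u: "u \<ge> 0"
  shows "chi k (Gk k u) - Gk k u \<le> chi k s - s + u * s - u * Gk k u"
proof (cases "u < 1")
  case False
  then have "Gk k u = 0" by (simp add: Gk_zero)
  moreover have "chi k s \<ge> 0" using chi_nonneg[OF k] .
  moreover have "(u - 1) * s \<ge> 0" using False s by simp
  ultimately show ?thesis by (simp add: chi_zero algebra_simps)
next
  case True
  define t where "t = (1 - u) powr k"
  have tG: "Gk k u = t" unfolding t_def using True by (simp add: Gk_pos_eq)
  have t0: "t > 0" unfolding t_def using True by simp
  have "t powr (1 + 1/k) = t * t powr (1/k)"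
    using t0 by (simp add: powr_add)
  also have "t powr (1/k) = 1 - u" unfolding t_def using True k by (simp add: powr_powr)
  finally have tp: "t powr (1 + 1/k) = t * (1 - u)" .
  have chit: "chi k t = k / (k + 1) * (t * (1 - u))" unfolding chi_def tp ..
  have pq: "1 / (1 + 1/k) + 1 / (k + 1) = 1" using k by (simp add: field_simps)
  have Y: "s * (1 - u) \<le> s powr (1 + 1/k) / (1 + 1/k) + (1 - u) powr (k + 1) / (k + 1)"
    by (rule Youngs_inequality) (use k s True pq in auto)
  have "(1 - u) powr (k + 1) = t * (1 - u)" unfolding t_def using True by (simp add: powr_add)
  moreover have "s powr (1 + 1/k) / (1 + 1/k) = chi k s" unfolding chi_def using k by (simp add: field_simps)
  ultimately have Y2: "s * (1 - u) \<le> chi k s + t * (1 - u) / (k + 1)" using Y by simp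
  define A where "A = t * (1 - u) / (k + 1)"
  have E: "chi k t - t + u * t = - A" unfolding chit A_def using k
    by (simp add: field_simps)
  have "s * (1 - u) = s - u * s" by (simp add: algebra_simps)
  then show ?thesis unfolding tG using Y2 E A_def by linarith
qed

lemma cont_leb:
  fixes \<phi> :: "'a::euclidean_space \<Rightarrow> real"
  assumes "continuous_on UNIV \<phi>"
  shows "\<phi> \<in> borel_measurable lebesgue"
proof -
  have "\<phi> \<in> borel_measurable borel" using assms by (rule borel_measurable_continuous_onI)
  then have "\<phi> \<in> borel_measurable lborel" by simp
  then show ?thesis by (rule measurable_completion)
qed

lemma sq_leb[measurable]: "(\<lambda>z::phase. sqrt (1 + (norm (snd z))\<^sup>2)) \<in> borel_measurable lebesgue"
  by (rule cont_leb) (intro continuous_intros)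
lemma nfst_leb[measurable]: "(\<lambda>z::phase. norm (fst z)) \<in> borel_measurable lebesgue"
  by (rule cont_leb) (intro continuous_intros)
lemma nsnd_leb[measurable]: "(\<lambda>z::phase. norm (snd z)) \<in> borel_measurable lebesgue"
  by (rule cont_leb) (intro continuous_intros)

lemma fst_comp_meas:
  fixes \<psi> \<psi>' :: "real^3 \<Rightarrow> real"
  assumes "\<psi>' \<in> borel_measurable lborel" and "AE x in lborel. \<psi> x = \<psi>' x"
  shows "(\<lambda>z::phase. \<psi> (fst z)) \<in> borel_measurable lebesgue"
proof (rule meas_AE_completion)
  have "(\<lambda>z. \<psi>' (fst z)) \<in> borel_measurable ((lborel::(real^3) measure) \<Otimes>\<^sub>M (lborel::(real^3) measure))"
    using assms(1) by measurable
  then show "(\<lambda>z::phase. \<psi>' (fst z)) \<in> borel_measurable lborel" by (simp add: lborel_prod)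
  show "AE z in lborel. \<psi> (fst z) = \<psi>' (fst (z::phase))" by (rule AE_fst_lborel[OF assms(2)])
qed

lemma rho_rot:
  assumes fs: "spher_sym f" and A: "A \<in> rot3"
  shows "rho f (A *v x) = rho f x"
proof -
  have oA: "orthogonal_matrix A" using A by (simp add: rot3_def)
  have nA: "norm (A *v v) = norm v" for v
    using orthogonal_transformation_norm[OF orth_trans[OF oA]] by simp
  define H where "H v = ennreal (sqrt (1 + (norm v)\<^sup>2) * f (A *v x, v))" for v
  have "(\<integral>\<^sup>+v. H (A *v v) \<partial>lebesgue) = (\<integral>\<^sup>+v. H v \<partial>lebesgue)" by (rule nn_integral_orth[OF oA])
  moreover have "H (A *v v) = ennreal (sqrt (1 + (norm v)\<^sup>2) * f (x, v))" for v
    unfolding H_def nA using fs A unfolding spher_sym_def by simp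
  ultimately show ?thesis unfolding rho_def H_def by simp
qed

lemma mass_r_rho:
  fixes F :: "phase \<Rightarrow> real"
  assumes "(\<lambda>z. ennreal (indicator {z. norm (fst z) \<le> r} z * sqrt (1 + (norm (snd z))\<^sup>2) * F z)) \<in> borel_measurable lebesgue"
  shows "mass_r F r = (\<integral>\<^sup>+x. (if norm x \<le> r then rho F x else 0) \<partial>lebesgue)"
  unfolding mass_r_def tonelli_leb(1)[OF assms] rho_def
  by (rule nn_integral_cong) (simp add: indicator_def)

lemma total_mass_rho:
  fixes F :: "phase \<Rightarrow> real"
  assumes "(\<lambda>z. ennreal (sqrt (1 + (norm (snd z))\<^sup>2) * F z)) \<in> borel_measurable lebesgue"
  shows "total_mass F = (\<integral>\<^sup>+x. rho F x \<partial>lebesgue)"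
  unfolding total_mass_def tonelli_leb(1)[OF assms] rho_def by simp

lemma meas_mass_integrand:
  fixes F :: "phase \<Rightarrow> real"
  assumes [measurable]: "F \<in> borel_measurable lebesgue"
  shows "(\<lambda>z. ennreal (indicator {z. norm (fst z) \<le> r} z * sqrt (1 + (norm (snd z))\<^sup>2) * F z)) \<in> borel_measurable lebesgue"
proof -
  have "Measurable.pred lebesgue (\<lambda>z::phase. norm (fst z) \<le> r)" by measurable
  then have [measurable]: "{z::phase. norm (fst z) \<le> r} \<in> sets lebesgue"
    unfolding pred_def by simp
  show ?thesis by measurable
qed

theorem lemma3p2:
  fixes k M \<beta> P :: real and f :: "phase \<Rightarrow> real"
  assumes "k > 0" and "M > 0" and "0 < \<beta>" and "\<beta> < 1/2"
    and "f \<in> A_tilde M \<beta>"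
    and "\<forall>z. f z \<le> 1"
    and "P \<ge> P0 k M \<beta>"
    and "ennreal (P powr (1/4)) * (\<integral>\<^sup>+ z. ennreal (indicator {z. norm (snd z) \<ge> P} z
            * sqrt (1 + (norm (snd z))\<^sup>2) * f z) \<partial>lebesgue) \<ge> 1"
  shows "\<exists>g :: phase \<Rightarrow> real.
           g \<in> borel_measurable lebesgue \<and> spher_sym g \<and> (\<forall>z. g z \<ge> 0)
         \<and> rho g = rho f
         \<and> g \<in> A_tilde M \<beta>
         \<and> Dfun k g \<le> Dfun k f
         \<and> (\<forall>x v. g (x, v) \<noteq> 0 \<longrightarrow> norm v \<le> P + 1)
         \<and> (\<forall>z. g z \<le> 1)
         \<and> ennreal (P powr (1/4)) * (\<integral>\<^sup>+ z. ennreal (indicator {z. P \<le> norm (snd z) \<and> norm (snd z) \<le> P + 1} z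
              * sqrt (1 + (norm (snd z))\<^sup>2) * g z) \<partial>lebesgue) \<le> 1"
proof -
  have k: "k > 0" by (rule assms(1))
  from assms(5) have fm[measurable]: "f \<in> borel_measurable lebesgue" and fs: "spher_sym f"
    and f0: "\<And>z. f z \<ge> 0" and tm: "total_mass f = ennreal M"
    and mr: "\<And>r. r > 0 \<Longrightarrow> mass_r f r \<le> ennreal (\<beta> * r)" and rho1: "\<And>x. rho f x \<le> 1"
    by (auto simp: A_tilde_def)
  have f1: "\<And>z. f z \<le> 1" using assms(6) by blast
  have hb: "0 < 1 - 2 * \<beta>" "1 - 2 * \<beta> \<le> 1" using assms(3,4) by auto
  have "64 * (k + 1)\<^sup>2 / (1 - 2 * \<beta>) \<le> P0 k M \<beta>" unfolding P0_def by (rule Max_ge) auto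
  moreover have "10 \<le> P0 k M \<beta>" unfolding P0_def by (rule Max_ge) auto
  ultimately have P1: "64 * (k + 1)\<^sup>2 / (1 - 2 * \<beta>) \<le> P" and P10: "10 \<le> P" using assms(7) by auto
  have "64 * (k + 1)\<^sup>2 * (1 - 2 * \<beta>) \<le> 64 * (k + 1)\<^sup>2" using hb by (simp add: mult_left_le)
  then have "64 * (k + 1)\<^sup>2 \<le> 64 * (k + 1)\<^sup>2 / (1 - 2 * \<beta>)" using hb by (simp add: le_divide_eq)
  with P1 have P2: "64 * (k + 1)\<^sup>2 \<le> P" by linarith
  have "(k + 1) * 1 \<le> (k + 1) * (16 * (k + 1))" using k by (intro mult_left_mono) auto
  then have "4 * ((k + 1) * 1) \<le> 4 * ((k + 1) * (16 * (k + 1)))" by simp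
  moreover have "4 * ((k + 1) * (16 * (k + 1))) = 64 * (k + 1)\<^sup>2" by (simp add: power2_eq_square algebra_simps)
  ultimately have "4 * (k + 1) \<le> 64 * (k + 1)\<^sup>2" by simp
  with P2 have P3: "4 * (k + 1) \<le> P" by linarith
  have Ppos: "P > 0" using P10 by simp
  define \<mu>0 where "\<mu>0 = 1 / P"
  have m0: "0 < \<mu>0" "\<mu>0 \<le> 1 / (4 * (k + 1))" unfolding \<mu>0_def using Ppos P3 k
    by (auto intro!: divide_left_mono)
  interpret mu: mu_setup k \<mu>0 by unfold_locales (use k m0 in auto)
  note Mu_meas'[measurable] = mu.Mu_meas
  note Gk_meas'[measurable] = Gk_meas[OF k]
  define r where "r x = enn2real (rho f x)" for x
  have rho_r: "rho f x = ennreal (r x)" for x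
    unfolding r_def using rho1[of x] by (simp add: order_le_less_trans[of _ 1 top])
  have r01: "0 \<le> r x" "r x \<le> 1" for x
  proof -
    show "0 \<le> r x" unfolding r_def by simp
    have "enn2real (rho f x) \<le> enn2real 1" by (rule enn2real_mono[OF rho1]) simp
    then show "r x \<le> 1" unfolding r_def by simp
  qed
  define \<mu> where "\<mu> x = Mu k \<mu>0 (r x)" for x
  have \<mu>r: "\<mu>0 \<le> \<mu> x" "\<mu> x \<le> 1" for x unfolding \<mu>_def by (rule mu.Mu_range)+
  have \<mu>Fr: "Fr k (\<mu> x) = r x" for x unfolding \<mu>_def by (rule mu.Mu_Fr[OF r01])
  define g where "g z = Gk k (\<mu> (fst z) * wv (snd z))" for z :: phase
  have u0: "0 \<le> \<mu> x * wv v" for x v using \<mu>r[of x] m0 wv_pos[of v] by simp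
  have g0: "0 \<le> g z" for z unfolding g_def by (rule Gk_nonneg)
  have g1: "g z \<le> 1" for z unfolding g_def using Gk_le1 k u0 by (simp add: less_imp_le)

  have rhog: "rho g x = rho f x" for x
  proof -
    have "rho g x = (\<integral>\<^sup>+v. ennreal (hF k (\<mu> x) v) \<partial>lebesgue)"
      unfolding rho_def g_def hF_def wv_def by simp
    also have "\<dots> = ennreal (Fr k (\<mu> x))" by (rule Fr_nn[OF k m0(1) \<mu>r(1)])
    finally show ?thesis by (simp add: \<mu>Fr rho_r)
  qed

  have gs: "spher_sym g" unfolding spher_sym_def
  proof (intro ballI allI)
    fix A x v assume A: "A \<in> rot3"
    have "\<mu> (A *v x) = \<mu> x" unfolding \<mu>_def r_def using rho_rot[OF fs A] by simp
    moreover have "wv (A *v v) = wv v"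
    proof -
      have oA: "orthogonal_matrix A" using A by (simp add: rot3_def)
      show ?thesis unfolding wv_def
        using orthogonal_transformation_norm[OF orth_trans[OF oA]] by simp
    qed
    ultimately show "g (A *v x, A *v v) = g (x, v)" unfolding g_def by simp
  qed

  have hfm: "(\<lambda>z. ennreal (sqrt (1 + (norm (snd z))\<^sup>2) * f z)) \<in> borel_measurable lebesgue"
    by measurable
  obtain \<phi> where \<phi>m[measurable]: "\<phi> \<in> borel_measurable lborel"
    and \<phi>ae: "AE x in lborel. (\<integral>\<^sup>+v. ennreal (sqrt (1 + (norm (snd (x, v)))\<^sup>2) * f (x, v)) \<partial>lebesgue) = \<phi> x"
    using tonelli_leb(3)[OF hfm] by blast
  have ae_rho: "AE x in lborel. rho f x = \<phi> x" using \<phi>ae by (simp add: rho_def)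
  have \<mu>m[measurable]: "(\<lambda>z::phase. \<mu> (fst z)) \<in> borel_measurable lebesgue"
  proof (rule fst_comp_meas[where \<psi>'="\<lambda>x. Mu k \<mu>0 (enn2real (\<phi> x))"])
    show "(\<lambda>x. Mu k \<mu>0 (enn2real (\<phi> x))) \<in> borel_measurable lborel" by measurable
    show "AE x in lborel. \<mu> x = Mu k \<mu>0 (enn2real (\<phi> x))"
      using ae_rho by eventually_elim (simp add: \<mu>_def r_def)
  qed
  have wvm[measurable]: "(\<lambda>z::phase. wv (snd z)) \<in> borel_measurable lebesgue"
    unfolding wv_def by (rule sq_leb)
  have gm[measurable]: "g \<in> borel_measurable lebesgue"
    unfolding g_def by measurable

  have rhog': "rho g = rho f" by (rule ext, rule rhog)
  have mrg: "mass_r g s = mass_r f s" for s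
    unfolding mass_r_rho[OF meas_mass_integrand[OF gm]] mass_r_rho[OF meas_mass_integrand[OF fm]] rhog' ..
  have hgm: "(\<lambda>z. ennreal (sqrt (1 + (norm (snd z))\<^sup>2) * g z)) \<in> borel_measurable lebesgue"
    by measurable
  have tmg: "total_mass g = total_mass f"
    unfolding total_mass_rho[OF hgm] total_mass_rho[OF hfm] rhog' ..
  have elg: "exp_lambda g = exp_lambda f" by (rule ext) (simp add: exp_lambda_def mrg)

  define m where "m s = enn2real (mass_r f s)" for s
  have mass_le: "mass_r f s \<le> total_mass f" for s
    unfolding mass_r_def total_mass_def
    by (rule nn_integral_mono) (use f0 in \<open>auto simp: indicator_def intro!: ennreal_leI\<close>)
  have mass_fin: "mass_r f s < top" for s
    using mass_le[of s] tm by (simp add: le_less_trans[of _ "ennreal M" top])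
  have mass_mono: "mass_r f s \<le> mass_r f s'" if "s \<le> s'" for s s'
    unfolding mass_r_def
    by (rule nn_integral_mono) (use f0 that in \<open>auto simp: indicator_def intro!: ennreal_leI\<close>)
  have m_mono: "mono m" unfolding mono_def m_def using mass_mono mass_fin by (blast intro: enn2real_mono)
  have m_meas[measurable]: "m \<in> borel_measurable borel" by (rule borel_measurable_mono[OF m_mono])
  have el_eq: "exp_lambda f = (\<lambda>s. if s > 0 then 1 / sqrt (1 - 2 * m s / s) else 1)"
    by (simp add: exp_lambda_def m_def fun_eq_iff)
  have el_meas[measurable]: "exp_lambda f \<in> borel_measurable borel" unfolding el_eq by measurable
  define E where "E z = exp_lambda f (norm (fst z))" for z :: phase
  have Em[measurable]: "E \<in> borel_measurable lebesgue"
    unfolding E_def by (rule measurable_compose[OF nfst_leb el_meas])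
  define C where "C = 1 / sqrt (1 - 2 * \<beta>)"
  have C1: "1 \<le> C" unfolding C_def using hb by (simp add: le_divide_eq real_sqrt_le_1_iff)
  have elb: "1 \<le> exp_lambda f s \<and> exp_lambda f s \<le> C" for s
  proof (cases "s > 0")
    case False then show ?thesis using C1 by (simp add: exp_lambda_def)
  next
    case True
    have m0': "0 \<le> m s" unfolding m_def by simp
    have "m s \<le> enn2real (ennreal (\<beta> * s))" unfolding m_def by (rule enn2real_mono[OF mr[OF True]]) simp
    then have mb: "m s \<le> \<beta> * s" using True assms(3) by simp
    define q where "q = 1 - 2 * m s / s"
    have q1: "q \<le> 1" unfolding q_def using m0' True by simp
    have "2 * m s / s \<le> 2 * \<beta>" using mb True by (simp add: divide_le_eq)
    then have q2: "1 - 2 * \<beta> \<le> q" unfolding q_def by simp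
    have sq: "sqrt (1 - 2 * \<beta>) \<le> sqrt q" using q2 by (rule real_sqrt_le_mono)
    have sqp: "0 < sqrt (1 - 2 * \<beta>)" using hb by simp
    have el: "exp_lambda f s = 1 / sqrt q" unfolding exp_lambda_def q_def using True m_def by simp
    have "sqrt q \<le> 1" using q1 by simp
    then have "1 \<le> 1 / sqrt q" using sqp sq by (simp add: le_divide_eq)
    moreover have "1 / sqrt q \<le> C" unfolding C_def using sq sqp by (intro divide_left_mono) auto
    ultimately show ?thesis using el by simp
  qed
  have Eb: "1 \<le> E z" "E z \<le> C" for z unfolding E_def using elb by auto

  define wf where "wf z = sqrt (1 + (norm (snd z))\<^sup>2) * f z" for z :: phase
  define wg where "wg z = sqrt (1 + (norm (snd z))\<^sup>2) * g z" for z :: phase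
  have wfm[measurable]: "wf \<in> borel_measurable lebesgue" unfolding wf_def by measurable
  have wgm[measurable]: "wg \<in> borel_measurable lebesgue" unfolding wg_def by measurable
  have wf0: "0 \<le> wf z" for z unfolding wf_def using f0 by simp
  have wg0: "0 \<le> wg z" for z unfolding wg_def using g0 by simp
  have fwf: "f z \<le> wf z" for z unfolding wf_def using f0[of z] by (simp add: mult_le_cancel_right1)
  have gwg: "g z \<le> wg z" for z unfolding wg_def using g0[of z] by (simp add: mult_le_cancel_right1)
  have C0: "0 \<le> C" using C1 by simp
  have intw: "integrable lebesgue (\<lambda>z. C * wF z)"
    if wFm: "wF \<in> borel_measurable lebesgue" and wF0: "\<And>z. 0 \<le> wF z"
      and tF: "(\<integral>\<^sup>+z. ennreal (wF z) \<partial>lebesgue) = ennreal M" for wF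
  proof (rule integrableI_nonneg)
    show "(\<lambda>z. C * wF z) \<in> borel_measurable lebesgue" using wFm by measurable
    show "AE z in lebesgue. 0 \<le> C * wF z" using C0 wF0 by simp
    have "(\<integral>\<^sup>+z. ennreal (C * wF z) \<partial>lebesgue) = (\<integral>\<^sup>+z. ennreal C * ennreal (wF z) \<partial>lebesgue)"
      using C0 wF0 by (simp add: ennreal_mult)
    also have "\<dots> = ennreal C * ennreal M" using wFm tF by (simp add: nn_integral_cmult)
    finally show "(\<integral>\<^sup>+z. ennreal (C * wF z) \<partial>lebesgue) < \<infinity>" by (simp add: ennreal_mult_less_top)
  qed
  have intf: "integrable lebesgue (\<lambda>z. C * wf z)"
    by (rule intw[OF wfm wf0]) (use tm in \<open>simp add: total_mass_def wf_def\<close>)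
  have intg: "integrable lebesgue (\<lambda>z. C * wg z)"
    by (rule intw[OF wgm wg0]) (use tm tmg in \<open>simp add: total_mass_def wg_def\<close>)

  define Df where "Df z = E z * (chi k (f z) - f z)" for z
  define Dg where "Dg z = E z * (chi k (g z) - g z)" for z
  define a where "a z = E z * \<mu> (fst z) * wf z" for z
  define b where "b z = E z * \<mu> (fst z) * wg z" for z
  have Dbound: "norm (E z * (chi k s - s)) \<le> norm (C * w)" if "0 \<le> s" "s \<le> 1" "s \<le> w" for z s w
  proof -
    have "0 \<le> chi k s" "chi k s \<le> s" using chi_nonneg[OF k] chi_le[OF k that(1,2)] by auto
    then have "\<bar>chi k s - s\<bar> \<le> w" using that by simp
    moreover have "\<bar>E z\<bar> \<le> C" using Eb[of z] by simp
    ultimately have "\<bar>E z\<bar> * \<bar>chi k s - s\<bar> \<le> C * w" by (intro mult_mono) auto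
    then show ?thesis using C0 that by (simp add: abs_mult)
  qed
  have intDf: "integrable lebesgue Df"
  proof (rule Bochner_Integration.integrable_bound[OF intf])
    show "Df \<in> borel_measurable lebesgue" unfolding Df_def by measurable
    show "AE z in lebesgue. norm (Df z) \<le> norm (C * wf z)"
      using Dbound f0 f1 fwf unfolding Df_def by simp
  qed
  have intDg: "integrable lebesgue Dg"
  proof (rule Bochner_Integration.integrable_bound[OF intg])
    show "Dg \<in> borel_measurable lebesgue" unfolding Dg_def by measurable
    show "AE z in lebesgue. norm (Dg z) \<le> norm (C * wg z)"
      using Dbound g0 g1 gwg unfolding Dg_def by simp
  qed
  have abound: "norm (E z * \<mu> (fst z) * w) \<le> norm (C * w)" if "0 \<le> w" for z w
  proof -
    have "E z * \<mu> (fst z) \<le> C * 1" using Eb[of z] \<mu>r[of "fst z"] m0 by (intro mult_mono) auto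
    then have "E z * \<mu> (fst z) * w \<le> C * w" using that by (simp add: mult_right_mono)
    moreover have "0 \<le> E z * \<mu> (fst z) * w" using Eb[of z] \<mu>r[of "fst z"] m0 that by simp
    ultimately show ?thesis by simp
  qed
  have am: "a \<in> borel_measurable lebesgue" unfolding a_def by measurable
  have bm: "b \<in> borel_measurable lebesgue" unfolding b_def by measurable
  have inta: "integrable lebesgue a"
    by (rule Bochner_Integration.integrable_bound[OF intf am]) (use abound wf0 in \<open>simp add: a_def\<close>)
  have intb: "integrable lebesgue b"
    by (rule Bochner_Integration.integrable_bound[OF intg bm]) (use abound wg0 in \<open>simp add: b_def\<close>)
  have a0: "0 \<le> a z" for z unfolding a_def using Eb[of z] \<mu>r[of "fst z"] m0 wf0[of z] by simp
  have b0: "0 \<le> b z" for z unfolding b_def using Eb[of z] \<mu>r[of "fst z"] m0 wg0[of z] by simp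

  have nnab: "(\<integral>\<^sup>+z. ennreal (a z) \<partial>lebesgue) = (\<integral>\<^sup>+z. ennreal (b z) \<partial>lebesgue)"
  proof -
    have ma: "(\<lambda>z. ennreal (a z)) \<in> borel_measurable lebesgue" using am by measurable
    have mb: "(\<lambda>z. ennreal (b z)) \<in> borel_measurable lebesgue" using bm by measurable
    define c where "c x = ennreal (exp_lambda f (norm x) * \<mu> x)" for x
    have c0: "0 \<le> exp_lambda f (norm x) * \<mu> x" for x using elb[of "norm x"] \<mu>r[of x] m0 by simp
    have ia: "(\<integral>\<^sup>+v. ennreal (a (x, v)) \<partial>lebesgue) = c x * rho f x"
      if sm: "(\<lambda>v. ennreal (wf (x, v))) \<in> borel_measurable lebesgue" for x
    proof -
      have "(\<integral>\<^sup>+v. ennreal (a (x, v)) \<partial>lebesgue) = (\<integral>\<^sup>+v. c x * ennreal (wf (x, v)) \<partial>lebesgue)"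
        unfolding a_def E_def c_def using c0[of x] wf0 by (simp add: ennreal_mult)
      also have "\<dots> = c x * (\<integral>\<^sup>+v. ennreal (wf (x, v)) \<partial>lebesgue)" by (rule nn_integral_cmult[OF sm])
      finally show ?thesis unfolding rho_def wf_def by simp
    qed
    have ib: "(\<integral>\<^sup>+v. ennreal (b (x, v)) \<partial>lebesgue) = c x * rho g x" for x
    proof -
      have "continuous_on UNIV (\<lambda>v. sqrt (1 + (norm v)\<^sup>2) * Gk k (\<mu> x * sqrt (1 + (norm v)\<^sup>2)))"
        by (intro continuous_intros continuous_on_compose2[OF Gk_cont[OF k]]) auto
      then have "(\<lambda>v. sqrt (1 + (norm v)\<^sup>2) * g (x, v)) \<in> borel_measurable borel"
        unfolding g_def wv_def by (simp add: borel_measurable_continuous_onI)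
      then have hm: "(\<lambda>v. sqrt (1 + (norm v)\<^sup>2) * g (x, v)) \<in> borel_measurable lebesgue"
        by (intro measurable_completion) simp
      have sm: "(\<lambda>v. ennreal (wg (x, v))) \<in> borel_measurable lebesgue"
        unfolding wg_def snd_conv by (rule measurable_compose[OF hm measurable_ennreal])
      have "(\<integral>\<^sup>+v. ennreal (b (x, v)) \<partial>lebesgue) = (\<integral>\<^sup>+v. c x * ennreal (wg (x, v)) \<partial>lebesgue)"
        unfolding b_def E_def c_def using c0[of x] wg0 by (simp add: ennreal_mult)
      also have "\<dots> = c x * (\<integral>\<^sup>+v. ennreal (wg (x, v)) \<partial>lebesgue)" by (rule nn_integral_cmult[OF sm])
      finally show ?thesis unfolding rho_def wg_def by simp
    qed
    have hfm': "(\<lambda>z. ennreal (wf z)) \<in> borel_measurable lebesgue" by measurable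
    have aesec: "AE x in lebesgue. (\<lambda>v. ennreal (wf (x, v))) \<in> borel_measurable lebesgue"
      by (rule AE_completion) (rule tonelli_leb(2)[OF hfm'])
    have aeq: "AE x in lebesgue. (\<integral>\<^sup>+v. ennreal (a (x, v)) \<partial>lebesgue) = c x * rho f x"
      using aesec by eventually_elim (rule ia)
    have "(\<integral>\<^sup>+z. ennreal (a z) \<partial>lebesgue) = (\<integral>\<^sup>+x. (\<integral>\<^sup>+v. ennreal (a (x, v)) \<partial>lebesgue) \<partial>lebesgue)"
      by (rule tonelli_leb(1)[OF ma])
    also have "\<dots> = (\<integral>\<^sup>+x. c x * rho f x \<partial>lebesgue)"
      by (rule nn_integral_cong_AE[OF aeq])
    also have "\<dots> = (\<integral>\<^sup>+x. (\<integral>\<^sup>+v. ennreal (b (x, v)) \<partial>lebesgue) \<partial>lebesgue)"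
      by (rule nn_integral_cong) (simp add: ib rhog)
    also have "\<dots> = (\<integral>\<^sup>+z. ennreal (b z) \<partial>lebesgue)"
      by (rule tonelli_leb(1)[OF mb, symmetric])
    finally show ?thesis .
  qed
  have intab: "integral\<^sup>L lebesgue a = integral\<^sup>L lebesgue b"
    using nnab by (simp add: integral_eq_nn_integral[OF am] integral_eq_nn_integral[OF bm] a0 b0)

  have pw: "Dg z \<le> Df z + a z - b z" for z
  proof -
    let ?u = "\<mu> (fst z) * wv (snd z)"
    have gz: "g z = Gk k ?u" unfolding g_def ..
    have "chi k (Gk k ?u) - Gk k ?u \<le> chi k (f z) - f z + ?u * f z - ?u * Gk k ?u"
      by (rule phi_ineq[OF k f0 u0])
    then have "E z * (chi k (g z) - g z) \<le> E z * (chi k (f z) - f z + ?u * f z - ?u * g z)"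
      using Eb[of z] gz by (intro mult_left_mono) auto
    moreover have "E z * (chi k (f z) - f z + ?u * f z - ?u * g z) = Df z + a z - b z"
      unfolding Df_def a_def b_def wf_def wg_def wv_def by (simp add: algebra_simps)
    ultimately show ?thesis unfolding Dg_def by simp
  qed
  have Dfg: "Dfun k g \<le> Dfun k f"
  proof -
    have "Dfun k g = integral\<^sup>L lebesgue Dg" unfolding Dfun_def elg Dg_def E_def ..
    also have "\<dots> \<le> integral\<^sup>L lebesgue (\<lambda>z. Df z + a z - b z)"
      by (rule integral_mono[OF intDg]) (use intDf inta intb pw in auto)
    also have "\<dots> = integral\<^sup>L lebesgue Df + integral\<^sup>L lebesgue a - integral\<^sup>L lebesgue b"
      using intDf inta intb by simp
    also have "\<dots> = Dfun k f" unfolding intab Dfun_def Df_def E_def by simp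
    finally show ?thesis .
  qed

  have supp: "norm v < P" if "g (x, v) \<noteq> 0" for x v
  proof -
    have "\<mu> x * wv v < 1"
    proof (rule ccontr)
      assume "\<not> \<mu> x * wv v < 1"
      then have "Gk k (\<mu> x * wv v) = 0" by (intro Gk_zero) simp
      with that show False unfolding g_def by simp
    qed
    moreover have "\<mu>0 * wv v \<le> \<mu> x * wv v" using \<mu>r[of x] wv_pos[of v] by (simp add: mult_right_mono)
    ultimately have "wv v / P < 1" unfolding \<mu>0_def by simp
    then have "wv v < P" using Ppos by simp
    then show ?thesis using norm_le_wv[of v] by simp
  qed
  have zero_int: "(\<lambda>z. ennreal (indicator {z. P \<le> norm (snd z) \<and> norm (snd z) \<le> P + 1} z
              * sqrt (1 + (norm (snd z))\<^sup>2) * g z)) = (\<lambda>z. 0)"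
  proof (rule ext)
    fix z :: phase
    obtain x v where z: "z = (x, v)" by (cases z)
    show "ennreal (indicator {z. P \<le> norm (snd z) \<and> norm (snd z) \<le> P + 1} z
              * sqrt (1 + (norm (snd z))\<^sup>2) * g z) = 0"
      using supp[of x v] unfolding z by (cases "g (x, v) = 0") (auto simp: indicator_def)
  qed
  have inA: "g \<in> A_tilde M \<beta>"
    unfolding A_tilde_def using gm gs g0 tmg tm mrg mr rhog rho1 by auto
  have supp': "\<forall>x v. g (x, v) \<noteq> 0 \<longrightarrow> norm v \<le> P + 1"
    using supp by (metis less_eq_real_def add_increasing2 zero_le_one less_add_one order_less_trans)
  show ?thesis
    using gm gs g0 rhog' inA Dfg supp' g1 zero_int
    by (intro exI[of _ g]) auto
qed

end
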